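(* A cancellative category $\mathcal C$ admits conditional weak left-lcms if and only if $\mathcal C$ is a strong Garside family in itself.
   Context: A category is cancellative if $fg=fg'\Rightarrow g=g'$ and $gf=g'f\Rightarrow g=g'$. $f\preccurlyeq g$ means $g=fg'$ for some $g'$. Two elements $f,g$ with the same source are left-disjoint if whenever $h\preccurlyeq h'f$ and $h\preccurlyeq h'g$, then $h\preccurlyeq h'$. An element $h$ is a weak left-lcm of $f,g$ (same target) if $h$ is a common left-multiple of $f$ and $g$ and every common left-multiple of $f$ and $g$ that admits a common left-multiple with $h$ is a left-multiple of $h$. $\mathcal C$ admits conditional weak left-lcms if, whenever $f,g$ admit a common left-multiple $h_0$, they admit a weak left-lcm $h$ such that $h_0$ is a left-multiple of $h$. $\mathcal C$ is a strong Garside family in itself if for all $f,g,s,t\in\mathcal C$ with $fs=gt$ there exist $f',g',h\in\mathcal C$ such that $f'$ and $g'$ are left-disjoint, $f's=g't$, $f=hf'$ and $g=hg'$. *)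

theory Defs
  imports Main
begin

text \<open>A (small) category is given by a set of objects Ob, a set of morphisms C,
  source and target maps, a composition cmp (written fg in the paper, meaning
  "first f, then g", defined when tgt f = src g) and identities.\<close>

definition category ::
  "'o set \<Rightarrow> 'a set \<Rightarrow> ('a \<Rightarrow> 'o) \<Rightarrow> ('a \<Rightarrow> 'o) \<Rightarrow> ('a \<Rightarrow> 'a \<Rightarrow> 'a) \<Rightarrow> ('o \<Rightarrow> 'a) \<Rightarrow> bool" where
  "category Ob C src tgt cmp ident \<longleftrightarrow>
     (\<forall>f\<in>C. src f \<in> Ob \<and> tgt f \<in> Ob) \<and>
     (\<forall>f\<in>C. \<forall>g\<in>C. tgt f = src g \<longrightarrow>
         cmp f g \<in> C \<and> src (cmp f g) = src f \<and> tgt (cmp f g) = tgt g) \<and>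
     (\<forall>f\<in>C. \<forall>g\<in>C. \<forall>h\<in>C. tgt f = src g \<and> tgt g = src h \<longrightarrow>
         cmp (cmp f g) h = cmp f (cmp g h)) \<and>
     (\<forall>x\<in>Ob. ident x \<in> C \<and> src (ident x) = x \<and> tgt (ident x) = x) \<and>
     (\<forall>f\<in>C. cmp (ident (src f)) f = f \<and> cmp f (ident (tgt f)) = f)"

definition cancellative :: "'a set \<Rightarrow> ('a \<Rightarrow> 'o) \<Rightarrow> ('a \<Rightarrow> 'o) \<Rightarrow> ('a \<Rightarrow> 'a \<Rightarrow> 'a) \<Rightarrow> bool" where
  "cancellative C src tgt cmp \<longleftrightarrow>
     (\<forall>f\<in>C. \<forall>g\<in>C. \<forall>g'\<in>C. tgt f = src g \<and> tgt f = src g' \<and> cmp f g = cmp f g' \<longrightarrow> g = g') \<and>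
     (\<forall>f\<in>C. \<forall>g\<in>C. \<forall>g'\<in>C. tgt g = src f \<and> tgt g' = src f \<and> cmp g f = cmp g' f \<longrightarrow> g = g')"

definition ldiv :: "'a set \<Rightarrow> ('a \<Rightarrow> 'o) \<Rightarrow> ('a \<Rightarrow> 'o) \<Rightarrow> ('a \<Rightarrow> 'a \<Rightarrow> 'a) \<Rightarrow> 'a \<Rightarrow> 'a \<Rightarrow> bool" where
  "ldiv C src tgt cmp f g \<longleftrightarrow> (\<exists>g'\<in>C. src g' = tgt f \<and> g = cmp f g')"

definition lmult :: "'a set \<Rightarrow> ('a \<Rightarrow> 'o) \<Rightarrow> ('a \<Rightarrow> 'o) \<Rightarrow> ('a \<Rightarrow> 'a \<Rightarrow> 'a) \<Rightarrow> 'a \<Rightarrow> 'a \<Rightarrow> bool" where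
  "lmult C src tgt cmp h f \<longleftrightarrow> (\<exists>k\<in>C. tgt k = src f \<and> h = cmp k f)"

definition common_lmult :: "'a set \<Rightarrow> ('a \<Rightarrow> 'o) \<Rightarrow> ('a \<Rightarrow> 'o) \<Rightarrow> ('a \<Rightarrow> 'a \<Rightarrow> 'a) \<Rightarrow> 'a \<Rightarrow> 'a \<Rightarrow> 'a \<Rightarrow> bool" where
  "common_lmult C src tgt cmp h f g \<longleftrightarrow>
     h \<in> C \<and> lmult C src tgt cmp h f \<and> lmult C src tgt cmp h g"

definition left_disjoint :: "'a set \<Rightarrow> ('a \<Rightarrow> 'o) \<Rightarrow> ('a \<Rightarrow> 'o) \<Rightarrow> ('a \<Rightarrow> 'a \<Rightarrow> 'a) \<Rightarrow> 'a \<Rightarrow> 'a \<Rightarrow> bool" where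
  "left_disjoint C src tgt cmp f g \<longleftrightarrow> src f = src g \<and>
     (\<forall>h\<in>C. \<forall>h'\<in>C. tgt h' = src f \<and>
         ldiv C src tgt cmp h (cmp h' f) \<and> ldiv C src tgt cmp h (cmp h' g)
         \<longrightarrow> ldiv C src tgt cmp h h')"

definition weak_left_lcm :: "'a set \<Rightarrow> ('a \<Rightarrow> 'o) \<Rightarrow> ('a \<Rightarrow> 'o) \<Rightarrow> ('a \<Rightarrow> 'a \<Rightarrow> 'a) \<Rightarrow> 'a \<Rightarrow> 'a \<Rightarrow> 'a \<Rightarrow> bool" where
  "weak_left_lcm C src tgt cmp h f g \<longleftrightarrow>
     common_lmult C src tgt cmp h f g \<and>
     (\<forall>h'. common_lmult C src tgt cmp h' f g \<and> (\<exists>m. common_lmult C src tgt cmp m h' h)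
        \<longrightarrow> lmult C src tgt cmp h' h)"

definition cond_weak_left_lcms :: "'a set \<Rightarrow> ('a \<Rightarrow> 'o) \<Rightarrow> ('a \<Rightarrow> 'o) \<Rightarrow> ('a \<Rightarrow> 'a \<Rightarrow> 'a) \<Rightarrow> bool" where
  "cond_weak_left_lcms C src tgt cmp \<longleftrightarrow>
     (\<forall>f\<in>C. \<forall>g\<in>C. \<forall>h0. common_lmult C src tgt cmp h0 f g \<longrightarrow>
        (\<exists>h. weak_left_lcm C src tgt cmp h f g \<and> lmult C src tgt cmp h0 h))"

definition strong_garside_in_itself :: "'a set \<Rightarrow> ('a \<Rightarrow> 'o) \<Rightarrow> ('a \<Rightarrow> 'o) \<Rightarrow> ('a \<Rightarrow> 'a \<Rightarrow> 'a) \<Rightarrow> bool" where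
  "strong_garside_in_itself C src tgt cmp \<longleftrightarrow>
     (\<forall>f\<in>C. \<forall>g\<in>C. \<forall>s\<in>C. \<forall>t\<in>C.
        tgt f = src s \<and> tgt g = src t \<and> cmp f s = cmp g t \<longrightarrow>
        (\<exists>f'\<in>C. \<exists>g'\<in>C. \<exists>h\<in>C.
           left_disjoint C src tgt cmp f' g' \<and>
           tgt f' = src s \<and> tgt g' = src t \<and> cmp f' s = cmp g' t \<and>
           tgt h = src f' \<and> tgt h = src g' \<and> f = cmp h f' \<and> g = cmp h g'))"

end

theory Submission
  imports Defs
begin

theorem mainTheorem5:
  fixes Ob :: "'o set" and C :: "'a set" and src tgt :: "'a \<Rightarrow> 'o"
    and cmp :: "'a \<Rightarrow> 'a \<Rightarrow> 'a" and ident :: "'o \<Rightarrow> 'a"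
  assumes "category Ob C src tgt cmp ident"
    and "cancellative C src tgt cmp"
  shows "cond_weak_left_lcms C src tgt cmp \<longleftrightarrow> strong_garside_in_itself C src tgt cmp"
proof -
  have cc: "\<And>f g. f \<in> C \<Longrightarrow> g \<in> C \<Longrightarrow> tgt f = src g \<Longrightarrow>
      cmp f g \<in> C \<and> src (cmp f g) = src f \<and> tgt (cmp f g) = tgt g"
    using assms(1) unfolding category_def by blast
  have as: "\<And>f g h. f \<in> C \<Longrightarrow> g \<in> C \<Longrightarrow> h \<in> C \<Longrightarrow> tgt f = src g \<Longrightarrow> tgt g = src h \<Longrightarrow>
      cmp (cmp f g) h = cmp f (cmp g h)"
    using assms(1) unfolding category_def by blast
  have lc: "\<And>f g g'. f \<in> C \<Longrightarrow> g \<in> C \<Longrightarrow> g' \<in> C \<Longrightarrow> tgt f = src g \<Longrightarrow> tgt f = src g'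
      \<Longrightarrow> cmp f g = cmp f g' \<Longrightarrow> g = g'"
    using assms(2) unfolding cancellative_def by blast
  have rc: "\<And>f g g'. f \<in> C \<Longrightarrow> g \<in> C \<Longrightarrow> g' \<in> C \<Longrightarrow> tgt g = src f \<Longrightarrow> tgt g' = src f
      \<Longrightarrow> cmp g f = cmp g' f \<Longrightarrow> g = g'"
    using assms(2) unfolding cancellative_def by blast
  show ?thesis
  proof
    assume H: "cond_weak_left_lcms C src tgt cmp"
    show "strong_garside_in_itself C src tgt cmp"
      unfolding strong_garside_in_itself_def
    proof (intro ballI impI)
      fix f g s t assume fC: "f \<in> C" and gC: "g \<in> C" and sC: "s \<in> C" and tC: "t \<in> C"
        and E: "tgt f = src s \<and> tgt g = src t \<and> cmp f s = cmp g t"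
      define h0 where "h0 = cmp f s"
      have h0C: "h0 \<in> C" using cc fC sC E h0_def by blast
      have "common_lmult C src tgt cmp h0 s t"
        unfolding common_lmult_def lmult_def using h0C fC gC E h0_def by metis
      then obtain w where W: "weak_left_lcm C src tgt cmp w s t" and "lmult C src tgt cmp h0 w"
        using H sC tC unfolding cond_weak_left_lcms_def by blast
      then obtain h where hC: "h \<in> C" and th: "tgt h = src w" and h0w: "h0 = cmp h w"
        unfolding lmult_def by blast
      from W have wC: "w \<in> C" and "lmult C src tgt cmp w s" and "lmult C src tgt cmp w t"
        unfolding weak_left_lcm_def common_lmult_def by auto
      then obtain f' g' where f'C: "f' \<in> C" and tf': "tgt f' = src s" and wf: "w = cmp f' s"
        and g'C: "g' \<in> C" and tg': "tgt g' = src t" and wg: "w = cmp g' t"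
        unfolding lmult_def by blast
      have sw1: "src w = src f'" using cc f'C sC tf' wf by metis
      have sw2: "src w = src g'" using cc g'C tC tg' wg by metis
      have hf'C: "cmp h f' \<in> C" and thf': "tgt (cmp h f') = tgt f'" using cc hC f'C th sw1 by auto
      have hg'C: "cmp h g' \<in> C" and thg': "tgt (cmp h g') = tgt g'" using cc hC g'C th sw2 by auto
      have "cmp f s = cmp (cmp h f') s" using as hC f'C sC th sw1 tf' h0w wf h0_def by metis
      hence f_eq: "f = cmp h f'" using rc[OF sC fC hf'C] E thf' tf' by metis
      have "cmp g t = cmp (cmp h g') t" using as hC g'C tC th sw2 tg' h0w wg h0_def E by metis
      hence g_eq: "g = cmp h g'" using rc[OF tC gC hg'C] E thg' tg' by metis
      have LD: "left_disjoint C src tgt cmp f' g'"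
        unfolding left_disjoint_def
      proof (intro conjI ballI impI)
        show "src f' = src g'" using sw1 sw2 by simp
        fix k h' assume kC: "k \<in> C" and h'C: "h' \<in> C" and
          D: "tgt h' = src f' \<and> ldiv C src tgt cmp k (cmp h' f') \<and> ldiv C src tgt cmp k (cmp h' g')"
        then obtain a b where aC: "a \<in> C" and sa: "src a = tgt k" and ea: "cmp h' f' = cmp k a"
          and bC: "b \<in> C" and sb: "src b = tgt k" and eb: "cmp h' g' = cmp k b"
          unfolding ldiv_def by blast
        have ta: "tgt a = src s" using cc[OF h'C f'C] cc[OF kC aC] D sa ea tf' by metis
        have tb: "tgt b = src t" using cc[OF h'C g'C] cc[OF kC bC] D sb eb tg' sw1 sw2 by metis
        have asC: "cmp a s \<in> C" and sas: "src (cmp a s) = src a" using cc aC sC ta by auto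
        have btC: "cmp b t \<in> C" using cc bC tC tb by auto
        have m1: "cmp h' w = cmp k (cmp a s)"
          using as[OF h'C f'C sC] as[OF kC aC sC] D tf' ea wf sa ta by metis
        have m2: "cmp h' w = cmp k (cmp b t)"
          using as[OF h'C g'C tC] as[OF kC bC tC] D tg' eb wg sb tb sw1 sw2 by metis
        have xeq: "cmp a s = cmp b t"
          using lc[OF kC asC btC] m1 m2 sas sa sb cc bC tC tb by metis
        define x where "x = cmp a s"
        have "common_lmult C src tgt cmp x s t"
          unfolding common_lmult_def lmult_def x_def using asC aC bC ta tb xeq by metis
        moreover have "common_lmult C src tgt cmp (cmp h' w) x w"
          unfolding common_lmult_def lmult_def x_def
          using cc[OF h'C wC] D sw1 kC sa sas m1 h'C by metis
        ultimately have "lmult C src tgt cmp x w" using W unfolding weak_left_lcm_def by blast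
        then obtain c where cC: "c \<in> C" and tc: "tgt c = src w" and xc: "x = cmp c w"
          unfolding lmult_def by blast
        have sc: "src c = tgt k" using cc[OF cC wC tc] xc x_def sas sa by metis
        have kcC: "cmp k c \<in> C" and tkc: "tgt (cmp k c) = src w" using cc kC cC sc tc by auto
        have "cmp (cmp k c) w = cmp h' w" using as[OF kC cC wC] sc tc xc x_def m1 by metis
        hence "cmp k c = h'" using rc[OF wC kcC h'C] tkc D sw1 by metis
        thus "ldiv C src tgt cmp k h'" unfolding ldiv_def using cC sc by metis
      qed
      show "\<exists>f'\<in>C. \<exists>g'\<in>C. \<exists>h\<in>C. left_disjoint C src tgt cmp f' g' \<and>
           tgt f' = src s \<and> tgt g' = src t \<and> cmp f' s = cmp g' t \<and>
           tgt h = src f' \<and> tgt h = src g' \<and> f = cmp h f' \<and> g = cmp h g'"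
        using f'C g'C hC LD tf' tg' wf wg th sw1 sw2 f_eq g_eq by metis
    qed
  next
    assume H: "strong_garside_in_itself C src tgt cmp"
    show "cond_weak_left_lcms C src tgt cmp"
      unfolding cond_weak_left_lcms_def
    proof (intro ballI allI impI)
      fix f g h0 assume fC: "f \<in> C" and gC: "g \<in> C" and CL: "common_lmult C src tgt cmp h0 f g"
      then obtain a b where aC: "a \<in> C" and ta: "tgt a = src f" and ea: "h0 = cmp a f"
        and bC: "b \<in> C" and tb: "tgt b = src g" and eb: "h0 = cmp b g"
        unfolding common_lmult_def lmult_def by blast
      obtain a' b' h where a'C: "a' \<in> C" and b'C: "b' \<in> C" and hC: "h \<in> C"
        and LD: "left_disjoint C src tgt cmp a' b'" and ta': "tgt a' = src f" and tb': "tgt b' = src g"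
        and eq: "cmp a' f = cmp b' g" and th1: "tgt h = src a'" and th2: "tgt h = src b'"
        and aa: "a = cmp h a'" and bb: "b = cmp h b'"
        using H aC bC fC gC ta tb ea eb unfolding strong_garside_in_itself_def by metis
      define w where "w = cmp a' f"
      have wC: "w \<in> C" and sw: "src w = src a'" using cc a'C fC ta' w_def by auto
      have cw: "common_lmult C src tgt cmp w f g"
        unfolding common_lmult_def lmult_def using wC a'C b'C ta' tb' eq w_def by metis
      have "weak_left_lcm C src tgt cmp w f g"
        unfolding weak_left_lcm_def
      proof (intro conjI allI impI)
        show "common_lmult C src tgt cmp w f g" by (rule cw)
        fix h' assume A: "common_lmult C src tgt cmp h' f g \<and> (\<exists>m. common_lmult C src tgt cmp m h' w)"
        then obtain p q where h'C: "h' \<in> C" and pC: "p \<in> C" and tp: "tgt p = src f" and ep: "h' = cmp p f"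
          and qC: "q \<in> C" and tq: "tgt q = src g" and eq2: "h' = cmp q g"
          unfolding common_lmult_def lmult_def by blast
        from A obtain m u v where uC: "u \<in> C" and tu: "tgt u = src h'" and mu: "m = cmp u h'"
          and vC: "v \<in> C" and tv: "tgt v = src w" and mv: "m = cmp v w"
          unfolding common_lmult_def lmult_def by blast
        have sh'p: "src h' = src p" using cc pC fC tp ep by metis
        have sh'q: "src h' = src q" using cc qC gC tq eq2 by metis
        have upC: "cmp u p \<in> C" and tup: "tgt (cmp u p) = src f" using cc uC pC tu sh'p tp by auto
        have va'C: "cmp v a' \<in> C" and tva': "tgt (cmp v a') = src f" using cc vC a'C tv sw ta' by auto
        have uqC: "cmp u q \<in> C" and tuq: "tgt (cmp u q) = src g" using cc uC qC tu sh'q tq by auto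
        have vb'C: "cmp v b' \<in> C" and tvb': "tgt (cmp v b') = src g"
          using cc vC b'C tv sw th1 th2 tb' by auto
        have "cmp (cmp u p) f = cmp (cmp v a') f"
          using as[OF uC pC fC] as[OF vC a'C fC] tu sh'p tp tv sw ta' mu mv ep w_def by metis
        hence e1: "cmp u p = cmp v a'" using rc[OF fC upC va'C] tup tva' by metis
        have "cmp (cmp u q) g = cmp (cmp v b') g"
          using as[OF uC qC gC] as[OF vC b'C gC] tu sh'q tq tv sw th1 th2 tb' mu mv eq2 eq w_def by metis
        hence e2: "cmp u q = cmp v b'" using rc[OF gC uqC vb'C] tuq tvb' by metis
        have "ldiv C src tgt cmp u (cmp v a')" unfolding ldiv_def using pC tu sh'p e1 by metis
        moreover have "ldiv C src tgt cmp u (cmp v b')" unfolding ldiv_def using qC tu sh'q e2 by metis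
        ultimately have "ldiv C src tgt cmp u v"
          using LD uC vC tv sw unfolding left_disjoint_def by metis
        then obtain c where cC: "c \<in> C" and sc: "src c = tgt u" and vc: "v = cmp u c"
          unfolding ldiv_def by blast
        have tc: "tgt c = src a'" using cc[OF uC cC] sc vc tv sw by metis
        have caC: "cmp c a' \<in> C" and tca: "tgt (cmp c a') = src f" and sca: "src (cmp c a') = src c"
          using cc cC a'C tc ta' by auto
        have "cmp u p = cmp u (cmp c a')" using e1 vc as[OF uC cC a'C] sc tc by metis
        hence pe: "p = cmp c a'" using lc[OF uC pC caC] tu sh'p sc sca by metis
        have "h' = cmp c w" using ep pe as[OF cC a'C fC] tc ta' w_def by metis
        thus "lmult C src tgt cmp h' w" unfolding lmult_def using cC tc sw by metis
      qed
      moreover have "lmult C src tgt cmp h0 w"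
        unfolding lmult_def using hC th1 sw ea aa as[OF hC a'C fC] ta' w_def by metis
      ultimately show "\<exists>h. weak_left_lcm C src tgt cmp h f g \<and> lmult C src tgt cmp h0 h" by blast
    qed
  qed
qed

end
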